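(* $\mathsf{HA}\vdash\mathsf{HA}^\exists$, i.e. every axiom of $\mathsf{HA}^\exists$ is provable in $\mathsf{HA}$. Consequently every formula provable in $\mathsf{HA}^\exists$ is provable in $\mathsf{HA}$.
   Context: $\mathsf{HA}$ is Heyting arithmetic: intuitionistic first-order arithmetic over $0,\mathsf{S},+,\cdot,=$ with the equality axioms, the successor axioms, the defining axioms for $+$ and $\cdot$, and the induction scheme $P(0)\wedge\forall\alpha(P(\alpha)\to P(\alpha+1))\to\forall\alpha P(\alpha)$ for all formulas $P$. The $\exists$-translation $F\mapsto F^\exists$ is: $F^\exists=F$ for atomic $F$; it commutes with $\wedge,\vee,\to,\exists$; and $(\forall xF)^\exists=\neg\exists x\neg F^\exists$. $\mathsf{HA}^\exists$ is the intuitionistic theory whose axioms are the $\exists$-translations of the axioms of $\mathsf{HA}$ (in particular, the translated induction axiom is $P(0)\wedge\neg\exists\alpha\neg(P(\alpha)\to P(\alpha+1))\to\neg\exists\alpha\neg P(\alpha)$). *)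

theory Defs
  imports Main
begin

section \<open>Syntax of first-order arithmetic (de Bruijn indices)\<close>

datatype tm = Var nat | Zero | S tm | Plus tm tm | Times tm tm

datatype fm = Eq tm tm | Bot | And fm fm | Or fm fm | Imp fm fm | All fm | Ex fm

definition Neg :: "fm \<Rightarrow> fm" where "Neg A = Imp A Bot"

fun lift_tm :: "nat \<Rightarrow> tm \<Rightarrow> tm" where
  "lift_tm k (Var i) = (if i < k then Var i else Var (Suc i))"
| "lift_tm k Zero = Zero"
| "lift_tm k (S t) = S (lift_tm k t)"
| "lift_tm k (Plus t u) = Plus (lift_tm k t) (lift_tm k u)"
| "lift_tm k (Times t u) = Times (lift_tm k t) (lift_tm k u)"

fun lift_fm :: "nat \<Rightarrow> fm \<Rightarrow> fm" where
  "lift_fm k (Eq t u) = Eq (lift_tm k t) (lift_tm k u)"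
| "lift_fm k Bot = Bot"
| "lift_fm k (And A B) = And (lift_fm k A) (lift_fm k B)"
| "lift_fm k (Or A B) = Or (lift_fm k A) (lift_fm k B)"
| "lift_fm k (Imp A B) = Imp (lift_fm k A) (lift_fm k B)"
| "lift_fm k (All A) = All (lift_fm (Suc k) A)"
| "lift_fm k (Ex A) = Ex (lift_fm (Suc k) A)"

fun subst_tm :: "nat \<Rightarrow> tm \<Rightarrow> tm \<Rightarrow> tm" where
  "subst_tm k u (Var i) = (if i < k then Var i else if i = k then u else Var (i - 1))"
| "subst_tm k u Zero = Zero"
| "subst_tm k u (S t) = S (subst_tm k u t)"
| "subst_tm k u (Plus t t') = Plus (subst_tm k u t) (subst_tm k u t')"
| "subst_tm k u (Times t t') = Times (subst_tm k u t) (subst_tm k u t')"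

fun subst_fm :: "nat \<Rightarrow> tm \<Rightarrow> fm \<Rightarrow> fm" where
  "subst_fm k u (Eq t t') = Eq (subst_tm k u t) (subst_tm k u t')"
| "subst_fm k u Bot = Bot"
| "subst_fm k u (And A B) = And (subst_fm k u A) (subst_fm k u B)"
| "subst_fm k u (Or A B) = Or (subst_fm k u A) (subst_fm k u B)"
| "subst_fm k u (Imp A B) = Imp (subst_fm k u A) (subst_fm k u B)"
| "subst_fm k u (All A) = All (subst_fm (Suc k) (lift_tm 0 u) A)"
| "subst_fm k u (Ex A) = Ex (subst_fm (Suc k) (lift_tm 0 u) A)"

abbreviation inst :: "fm \<Rightarrow> tm \<Rightarrow> fm" where "inst A t \<equiv> subst_fm 0 t A"

text \<open>For a formula \<open>P\<close> with distinguished variable 0 (= \<alpha>), the formula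
  \<open>P(\<alpha>+1)\<close>, i.e. variable 0 replaced by \<open>S (Var 0)\<close>, all other variables unchanged.\<close>
definition succ_inst :: "fm \<Rightarrow> fm" where
  "succ_inst P = subst_fm 0 (S (Var 0)) (lift_fm 1 P)"

inductive deriv :: "fm set \<Rightarrow> fm list \<Rightarrow> fm \<Rightarrow> bool" where
  Axiom: "A \<in> Ax \<Longrightarrow> deriv Ax \<Gamma> A"
| Assum: "A \<in> set \<Gamma> \<Longrightarrow> deriv Ax \<Gamma> A"
| BotE: "deriv Ax \<Gamma> Bot \<Longrightarrow> deriv Ax \<Gamma> A"
| AndI: "deriv Ax \<Gamma> A \<Longrightarrow> deriv Ax \<Gamma> B \<Longrightarrow> deriv Ax \<Gamma> (And A B)"
| AndE1: "deriv Ax \<Gamma> (And A B) \<Longrightarrow> deriv Ax \<Gamma> A"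
| AndE2: "deriv Ax \<Gamma> (And A B) \<Longrightarrow> deriv Ax \<Gamma> B"
| OrI1: "deriv Ax \<Gamma> A \<Longrightarrow> deriv Ax \<Gamma> (Or A B)"
| OrI2: "deriv Ax \<Gamma> B \<Longrightarrow> deriv Ax \<Gamma> (Or A B)"
| OrE: "deriv Ax \<Gamma> (Or A B) \<Longrightarrow> deriv Ax (A # \<Gamma>) C \<Longrightarrow> deriv Ax (B # \<Gamma>) C
        \<Longrightarrow> deriv Ax \<Gamma> C"
| ImpI: "deriv Ax (A # \<Gamma>) B \<Longrightarrow> deriv Ax \<Gamma> (Imp A B)"
| ImpE: "deriv Ax \<Gamma> (Imp A B) \<Longrightarrow> deriv Ax \<Gamma> A \<Longrightarrow> deriv Ax \<Gamma> B"
| AllI: "deriv Ax (map (lift_fm 0) \<Gamma>) A \<Longrightarrow> deriv Ax \<Gamma> (All A)"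
| AllE: "deriv Ax \<Gamma> (All A) \<Longrightarrow> deriv Ax \<Gamma> (inst A t)"
| ExI: "deriv Ax \<Gamma> (inst A t) \<Longrightarrow> deriv Ax \<Gamma> (Ex A)"
| ExE: "deriv Ax \<Gamma> (Ex A) \<Longrightarrow> deriv Ax (A # map (lift_fm 0) \<Gamma>) (lift_fm 0 B)
        \<Longrightarrow> deriv Ax \<Gamma> B"

text \<open>Provability in the theory with axiom set \<open>Ax\<close> (free variables of axioms are
  schematic, i.e. implicitly universally quantified).\<close>
definition provable :: "fm set \<Rightarrow> fm \<Rightarrow> bool" where
  "provable Ax A \<longleftrightarrow> deriv Ax [] A"

abbreviation "x \<equiv> Var 0"
abbreviation "y \<equiv> Var 1"
abbreviation "z \<equiv> Var 2"

definition equality_axioms :: "fm set" where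
  "equality_axioms =
    { Eq x x,
      Imp (Eq x y) (Eq y x),
      Imp (Eq x y) (Imp (Eq y z) (Eq x z)),
      Imp (Eq x y) (Eq (S x) (S y)),
      Imp (Eq x y) (Eq (Plus x z) (Plus y z)),
      Imp (Eq x y) (Eq (Plus z x) (Plus z y)),
      Imp (Eq x y) (Eq (Times x z) (Times y z)),
      Imp (Eq x y) (Eq (Times z x) (Times z y)) }"

definition successor_axioms :: "fm set" where
  "successor_axioms = { Neg (Eq (S x) Zero), Imp (Eq (S x) (S y)) (Eq x y) }"

definition arith_axioms :: "fm set" where
  "arith_axioms =
    { Eq (Plus x Zero) x,
      Eq (Plus x (S y)) (S (Plus x y)),
      Eq (Times x Zero) Zero,
      Eq (Times x (S y)) (Plus (Times x y) x) }"

definition induction_axiom :: "fm \<Rightarrow> fm" where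
  "induction_axiom P = Imp (And (inst P Zero) (All (Imp P (succ_inst P)))) (All P)"

definition HA_axioms :: "fm set" where
  "HA_axioms = equality_axioms \<union> successor_axioms \<union> arith_axioms
               \<union> range induction_axiom"

fun ex_tr :: "fm \<Rightarrow> fm" where
  "ex_tr (Eq t u) = Eq t u"
| "ex_tr Bot = Bot"
| "ex_tr (And A B) = And (ex_tr A) (ex_tr B)"
| "ex_tr (Or A B) = Or (ex_tr A) (ex_tr B)"
| "ex_tr (Imp A B) = Imp (ex_tr A) (ex_tr B)"
| "ex_tr (Ex A) = Ex (ex_tr A)"
| "ex_tr (All A) = Neg (Ex (Neg (ex_tr A)))"

definition HAex_axioms :: "fm set" where
  "HAex_axioms = ex_tr ` HA_axioms"

end

theory Submission
  imports Defs
begin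

lemma lift_tm_lift_tm: "k \<le> j \<Longrightarrow> lift_tm (Suc j) (lift_tm k t) = lift_tm k (lift_tm j t)"
  by (induction t) auto

lemma lift_fm_lift_fm: "k \<le> j \<Longrightarrow> lift_fm (Suc j) (lift_fm k A) = lift_fm k (lift_fm j A)"
  by (induction A arbitrary: k j) (auto simp: lift_tm_lift_tm)

lemma lift_subst_tm: "k \<le> j \<Longrightarrow> lift_tm j (subst_tm k u t) = subst_tm k (lift_tm j u) (lift_tm (Suc j) t)"
  by (induction t) auto

lemma lift_subst_fm: "k \<le> j \<Longrightarrow> lift_fm j (subst_fm k u A) = subst_fm k (lift_tm j u) (lift_fm (Suc j) A)"
  by (induction A arbitrary: k j u) (auto simp: lift_subst_tm lift_tm_lift_tm[of 0, symmetric])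

lemma subst_lift_id_tm: "subst_tm k (Var k) (lift_tm (Suc k) t) = t"
  by (induction t) auto

lemma subst_lift_id_fm: "subst_fm k (Var k) (lift_fm (Suc k) A) = A"
  by (induction A arbitrary: k) (auto simp: subst_lift_id_tm)

lemma ex_tr_lift: "ex_tr (lift_fm k A) = lift_fm k (ex_tr A)"
  by (induction A arbitrary: k) (auto simp: Neg_def)

lemma ex_tr_subst: "ex_tr (subst_fm k u A) = subst_fm k u (ex_tr A)"
  by (induction A arbitrary: k u) (auto simp: Neg_def)

lemma weaken: "deriv Ax \<Gamma> A \<Longrightarrow> set \<Gamma> \<subseteq> set \<Gamma>' \<Longrightarrow> deriv Ax \<Gamma>' A"
proof (induction arbitrary: \<Gamma>' rule: deriv.induct)
  case (OrE Ax \<Gamma> A B C)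
  then show ?case by (metis deriv.OrE insert_mono list.set(2))
next
  case (ImpI Ax A \<Gamma> B)
  then show ?case by (metis deriv.ImpI insert_mono list.set(2))
next
  case (AllI Ax \<Gamma> A)
  then show ?case by (metis deriv.AllI image_mono list.set_map)
next
  case (ExE Ax \<Gamma> A B)
  have "set (A # map (lift_fm 0) \<Gamma>) \<subseteq> set (A # map (lift_fm 0) \<Gamma>')"
    using ExE.prems by auto
  then show ?case using ExE by (metis deriv.ExE)
qed (auto intro: deriv.intros)

lemma transfer_ax: "deriv Ax1 \<Gamma> A \<Longrightarrow> (\<forall>B\<in>Ax1. deriv Ax2 [] B) \<Longrightarrow> deriv Ax2 \<Gamma> A"
proof (induction rule: deriv.induct)
  case (Axiom A Ax \<Gamma>)
  then show ?case using weaken by fastforce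
qed (auto intro: deriv.intros)

lemma nn_mp:
  assumes h1: "deriv Ax \<Gamma> (Neg (Neg (Imp A B)))" and h2: "deriv Ax \<Gamma> (Neg (Neg A))"
  shows "deriv Ax \<Gamma> (Neg (Neg B))"
proof -
  let ?G = "Imp A B # A # Imp B Bot # \<Gamma>"
  have "deriv Ax ?G Bot"
    by (rule ImpE[where A=B], rule Assum, simp, rule ImpE[where A=A]) (auto intro: Assum)
  hence "deriv Ax (A # Imp B Bot # \<Gamma>) (Neg (Imp A B))" unfolding Neg_def by (rule ImpI)
  moreover have "deriv Ax (A # Imp B Bot # \<Gamma>) (Neg (Neg (Imp A B)))"
    by (rule weaken[OF h1]) auto
  ultimately have "deriv Ax (A # Imp B Bot # \<Gamma>) Bot"
    unfolding Neg_def by (metis ImpE)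
  hence "deriv Ax (Imp B Bot # \<Gamma>) (Neg A)" unfolding Neg_def by (rule ImpI)
  moreover have "deriv Ax (Imp B Bot # \<Gamma>) (Neg (Neg A))"
    by (rule weaken[OF h2]) auto
  ultimately have "deriv Ax (Imp B Bot # \<Gamma>) Bot"
    unfolding Neg_def by (metis ImpE)
  thus ?thesis unfolding Neg_def by (rule ImpI)
qed

lemma nn_intro: "deriv Ax \<Gamma> A \<Longrightarrow> deriv Ax \<Gamma> (Neg (Neg A))"
proof -
  assume h: "deriv Ax \<Gamma> A"
  have "deriv Ax (Neg A # \<Gamma>) A" by (rule weaken[OF h]) auto
  moreover have "deriv Ax (Neg A # \<Gamma>) (Neg A)" by (rule Assum) simp
  ultimately have "deriv Ax (Neg A # \<Gamma>) Bot" unfolding Neg_def by (metis ImpE)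
  thus ?thesis by (metis ImpI Neg_def)
qed

lemma lift_succ: "lift_fm (Suc 0) (succ_inst Q) = succ_inst (lift_fm (Suc 0) Q)"
proof -
  have "lift_fm 1 (subst_fm 0 (S (Var 0)) (lift_fm 1 Q)) =
        subst_fm 0 (lift_tm 1 (S (Var 0))) (lift_fm (Suc 1) (lift_fm 1 Q))"
    by (rule lift_subst_fm) simp
  also have "lift_fm (Suc 1) (lift_fm 1 Q) = lift_fm 1 (lift_fm 1 Q)"
    by (rule lift_fm_lift_fm) simp
  finally have "lift_fm 1 (subst_fm 0 (S (Var 0)) (lift_fm 1 Q)) =
     subst_fm 0 (S (Var 0)) (lift_fm 1 (lift_fm 1 Q))" by simp
  thus ?thesis unfolding succ_inst_def by simp
qed

lemma ind_ex:
  "deriv HA_axioms [] (Imp (And (inst Q Zero) (Neg (Ex (Neg (Imp Q (succ_inst Q))))))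
       (Neg (Ex (Neg Q))))"
proof -
  define H where "H = And (inst Q Zero) (Neg (Ex (Neg (Imp Q (succ_inst Q)))))"
  define Q1 where "Q1 = lift_fm 1 Q"
  define Q1' where "Q1' = succ_inst Q1"
  define G1 where "G1 = [Ex (Neg Q), H]"
  define G2 where "G2 = Neg Q # map (lift_fm 0) G1"
  define G3 where "G3 = map (lift_fm 0) G2"
  define G4 where "G4 = Neg (Imp Q1 Q1') # G3"
  have LH: "lift_fm 0 H = And (inst Q1 Zero) (Neg (Ex (Neg (Imp Q1 Q1'))))"
    unfolding H_def Q1_def Q1'_def by (simp add: Neg_def lift_subst_fm lift_succ)
  have LHin: "lift_fm 0 H \<in> set G2" unfolding G2_def G1_def by simp
  have LLH: "lift_fm 0 (lift_fm 0 H) = And (lift_fm 0 (inst Q1 Zero))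
       (Neg (Ex (Neg (Imp (lift_fm 1 Q1) (lift_fm 1 Q1')))))"
    unfolding LH by (simp add: Neg_def)
  have "lift_fm 0 (lift_fm 0 H) \<in> set G4" unfolding G4_def G3_def using LHin by simp
  hence "deriv HA_axioms G4 (lift_fm 0 (lift_fm 0 H))" by (rule Assum)
  hence a1: "deriv HA_axioms G4 (Neg (Ex (Neg (Imp (lift_fm 1 Q1) (lift_fm 1 Q1')))))"
    unfolding LLH by (rule AndE2)
  have "deriv HA_axioms G4 (Neg (Imp Q1 Q1'))" unfolding G4_def by (rule Assum) simp
  moreover have "inst (Neg (Imp (lift_fm 1 Q1) (lift_fm 1 Q1'))) (Var 0) = Neg (Imp Q1 Q1')"
    by (simp add: Neg_def subst_lift_id_fm)
  ultimately have "deriv HA_axioms G4 (inst (Neg (Imp (lift_fm 1 Q1) (lift_fm 1 Q1'))) (Var 0))"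
    by simp
  hence "deriv HA_axioms G4 (Ex (Neg (Imp (lift_fm 1 Q1) (lift_fm 1 Q1'))))" by (rule ExI)
  with a1 have "deriv HA_axioms G4 Bot" unfolding Neg_def by (metis ImpE)
  hence A: "deriv HA_axioms G3 (Neg (Neg (Imp Q1 Q1')))"
    unfolding G4_def by (metis ImpI Neg_def)
  have "deriv HA_axioms (Neg (Neg Q1) # G3) (Neg (Neg Q1'))"
  proof (rule nn_mp)
    show "deriv HA_axioms (Neg (Neg Q1) # G3) (Neg (Neg (Imp Q1 Q1')))"
      by (rule weaken[OF A]) auto
    show "deriv HA_axioms (Neg (Neg Q1) # G3) (Neg (Neg Q1))" by (rule Assum) simp
  qed
  hence "deriv HA_axioms G3 (Imp (Neg (Neg Q1)) (Neg (Neg Q1')))" by (rule ImpI)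
  hence step: "deriv HA_axioms G2 (All (Imp (Neg (Neg Q1)) (Neg (Neg Q1'))))"
    unfolding G3_def by (rule AllI)
  have I: "deriv HA_axioms G2 (Imp (And (Neg (Neg (inst Q1 Zero)))
            (All (Imp (Neg (Neg Q1)) (Neg (Neg Q1'))))) (All (Neg (Neg Q1))))"
  proof -
    have "induction_axiom (Neg (Neg Q1)) \<in> HA_axioms" unfolding HA_axioms_def by simp
    moreover have "induction_axiom (Neg (Neg Q1)) = Imp (And (Neg (Neg (inst Q1 Zero)))
            (All (Imp (Neg (Neg Q1)) (Neg (Neg Q1'))))) (All (Neg (Neg Q1)))"
      unfolding induction_axiom_def succ_inst_def Q1'_def by (simp add: Neg_def)
    ultimately show ?thesis by (metis Axiom)
  qed
  have "deriv HA_axioms G2 (lift_fm 0 H)" using LHin by (rule Assum)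
  hence "deriv HA_axioms G2 (inst Q1 Zero)" unfolding LH by (rule AndE1)
  hence P1: "deriv HA_axioms G2 (Neg (Neg (inst Q1 Zero)))" by (rule nn_intro)
  have "deriv HA_axioms G2 (All (Neg (Neg Q1)))"
    using I P1 step by (metis ImpE AndI)
  hence "deriv HA_axioms G2 (inst (Neg (Neg Q1)) (Var 0))" by (rule AllE)
  moreover have "inst (Neg (Neg Q1)) (Var 0) = Neg (Neg Q)"
    unfolding Q1_def by (simp add: Neg_def subst_lift_id_fm)
  ultimately have nnQ: "deriv HA_axioms G2 (Neg (Neg Q))" by simp
  have "deriv HA_axioms G2 (Neg Q)" unfolding G2_def by (rule Assum) simp
  with nnQ have "deriv HA_axioms G2 Bot" unfolding Neg_def by (metis ImpE)
  hence "deriv HA_axioms (Neg Q # map (lift_fm 0) G1) (lift_fm 0 Bot)" unfolding G2_def by simp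
  moreover have "deriv HA_axioms G1 (Ex (Neg Q))" unfolding G1_def by (rule Assum) simp
  ultimately have "deriv HA_axioms G1 Bot" by (metis ExE)
  hence "deriv HA_axioms [H] (Neg (Ex (Neg Q)))" unfolding G1_def Neg_def by (rule ImpI)
  thus ?thesis unfolding H_def by (rule ImpI)
qed

lemma ex_tr_ind: "ex_tr (induction_axiom P) =
  Imp (And (inst (ex_tr P) Zero) (Neg (Ex (Neg (Imp (ex_tr P) (succ_inst (ex_tr P)))))))
       (Neg (Ex (Neg (ex_tr P))))"
  unfolding induction_axiom_def succ_inst_def by (simp add: ex_tr_subst ex_tr_lift Neg_def)

lemma part1: "A \<in> HAex_axioms \<Longrightarrow> deriv HA_axioms [] A"
proof -
  assume "A \<in> HAex_axioms"
  then obtain B where B: "B \<in> HA_axioms" "A = ex_tr B" unfolding HAex_axioms_def by auto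
  show ?thesis
  proof (cases "B \<in> range induction_axiom")
    case True
    then obtain P where "B = induction_axiom P" by auto
    then show ?thesis using B ind_ex ex_tr_ind by simp
  next
    case False
    hence "B \<in> equality_axioms \<union> successor_axioms \<union> arith_axioms" using B unfolding HA_axioms_def by auto
    hence "ex_tr B = B"
      unfolding equality_axioms_def successor_axioms_def arith_axioms_def by (auto simp: Neg_def)
    then show ?thesis using B by (metis Axiom)
  qed
qed

theorem mainTheorem9:
  shows "(\<forall>A \<in> HAex_axioms. provable HA_axioms A)
       \<and> (\<forall>A. provable HAex_axioms A \<longrightarrow> provable HA_axioms A)"
  using part1 transfer_ax unfolding provable_def by blast

end
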